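(* Consider the closed-loop system $\dot p_i=\mathrm{sat}(v_i^{\mathrm{ms}}(\mathbf p)+v_i^{\mathrm{cv}}(\mathbf p))$, $i=1,\dots,n$, defined in the context (with true masses $P_k(\mathbf p)$), and let $S\subset\mathbb{R}^d$ (the desired shape) be a closed convex set containing all sample points $q_1,\dots,q_m$. Then for every initial state $\mathbf p(t_0)\in\mathbb{R}^{dn}$ and every $i\in\{1,\dots,n\}$, $\operatorname{dist}(p_i(t),S)\to0$ as $t\to\infty$; i.e., all robots converge to the desired shape.
   Context: Setting: $n\ge2$ robots in $\mathbb{R}^d$, positions $p_i\in\mathbb{R}^d$, configuration $\mathbf p=[p_1^\top,\dots,p_n^\top]^\top\in\mathbb{R}^{dn}$; fixed sample points $q_1,\dots,q_m\in\mathbb{R}^d$; constants $\beta>0$, $\sigma_1>0$, $\sigma_2>0$, $\varepsilon\in(0,1)$, $r_{\mathrm{avoid}}>0$, $v_{\max}>0$. Mass: $P_k(\mathbf p)=\frac1n\sum_{i=1}^n e^{-\beta\|q_k-p_i\|^2}$. Meanshift command: $v_i^{\mathrm{ms}}(\mathbf p)=\dfrac{\frac{\sigma_1}{m}\sum_{k=1}^m P_k(\mathbf p)^{-1}e^{-\beta\|q_k-p_i\|^2}(q_k-p_i)}{\sum_{k=1}^m P_k(\mathbf p)^{-1}e^{-\beta\|q_k-p_i\|^2}}$. Repulsive term: $\tilde v_i^{\mathrm{cv}}=\sigma_2\sum_{j\ne i,\ \|p_i-p_j\|\le r_{\mathrm{avoid}}}\frac{r_{\mathrm{avoid}}-\|p_i-p_j\|}{\|p_i-p_j\|+\varepsilon}(p_i-p_j)$.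 With $\varphi=\min\{\|v_i^{\mathrm{ms}}\|^2/\varepsilon,1\}$, the gain is $\kappa_2=\varphi$ if $(v_i^{\mathrm{ms}})^\top\tilde v_i^{\mathrm{cv}}\ge0$ and $\kappa_2=\varphi\min\{-(1-\varepsilon)\|v_i^{\mathrm{ms}}\|^2/((v_i^{\mathrm{ms}})^\top\tilde v_i^{\mathrm{cv}}),1\}$ if $(v_i^{\mathrm{ms}})^\top\tilde v_i^{\mathrm{cv}}<0$; collision-avoidance command $v_i^{\mathrm{cv}}=\kappa_2\tilde v_i^{\mathrm{cv}}$. Saturation: $\mathrm{sat}(z)=v_{\max}z/\|z\|$ if $\|z\|>v_{\max}$, and $\mathrm{sat}(z)=z$ otherwise. *)

theory Defs
  imports "HOL-Analysis.Analysis"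
begin

text \<open>Robots are indexed by 0..n-1, sample points by 0..m-1.
  A configuration is a map p :: nat \<Rightarrow> 'a (only values at i < n matter),
  where 'a is the ambient Euclidean space R^d.\<close>

definition mass :: "real \<Rightarrow> nat \<Rightarrow> (nat \<Rightarrow> 'a::euclidean_space) \<Rightarrow> 'a \<Rightarrow> real" where
  "mass \<beta> n p qk = (1 / real n) * (\<Sum>i<n. exp (- \<beta> * (norm (qk - p i))\<^sup>2))"

definition v_ms :: "real \<Rightarrow> real \<Rightarrow> nat \<Rightarrow> nat \<Rightarrow> (nat \<Rightarrow> 'a::euclidean_space)
    \<Rightarrow> (nat \<Rightarrow> 'a) \<Rightarrow> nat \<Rightarrow> 'a" where
  "v_ms \<beta> \<sigma>1 n m q p i =
     (1 / (\<Sum>k<m. inverse (mass \<beta> n p (q k)) * exp (- \<beta> * (norm (q k - p i))\<^sup>2))) *\<^sub>R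
     ((\<sigma>1 / real m) *\<^sub>R
       (\<Sum>k<m. (inverse (mass \<beta> n p (q k)) * exp (- \<beta> * (norm (q k - p i))\<^sup>2)) *\<^sub>R (q k - p i)))"

definition v_cv_tilde :: "real \<Rightarrow> real \<Rightarrow> real \<Rightarrow> nat \<Rightarrow> (nat \<Rightarrow> 'a::euclidean_space) \<Rightarrow> nat \<Rightarrow> 'a" where
  "v_cv_tilde \<sigma>2 \<epsilon> r_avoid n p i =
     \<sigma>2 *\<^sub>R (\<Sum>j\<in>{j. j < n \<and> j \<noteq> i \<and> norm (p i - p j) \<le> r_avoid}.
        ((r_avoid - norm (p i - p j)) / (norm (p i - p j) + \<epsilon>)) *\<^sub>R (p i - p j))"

definition kappa2 :: "real \<Rightarrow> 'a::euclidean_space \<Rightarrow> 'a \<Rightarrow> real" where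
  "kappa2 \<epsilon> vms vt =
     (let \<phi> = min ((norm vms)\<^sup>2 / \<epsilon>) 1 in
      if vms \<bullet> vt \<ge> 0 then \<phi>
      else \<phi> * min (- (1 - \<epsilon>) * (norm vms)\<^sup>2 / (vms \<bullet> vt)) 1)"

definition v_cv :: "real \<Rightarrow> real \<Rightarrow> real \<Rightarrow> real \<Rightarrow> real \<Rightarrow> nat \<Rightarrow> nat \<Rightarrow> (nat \<Rightarrow> 'a::euclidean_space)
    \<Rightarrow> (nat \<Rightarrow> 'a) \<Rightarrow> nat \<Rightarrow> 'a" where
  "v_cv \<beta> \<sigma>1 \<sigma>2 \<epsilon> r_avoid n m q p i =
     kappa2 \<epsilon> (v_ms \<beta> \<sigma>1 n m q p i) (v_cv_tilde \<sigma>2 \<epsilon> r_avoid n p i) *\<^sub>R v_cv_tilde \<sigma>2 \<epsilon> r_avoid n p i"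

definition sat :: "real \<Rightarrow> 'a::euclidean_space \<Rightarrow> 'a" where
  "sat vmax z = (if norm z > vmax then (vmax / norm z) *\<^sub>R z else z)"

definition closed_loop :: "real \<Rightarrow> real \<Rightarrow> real \<Rightarrow> real \<Rightarrow> real \<Rightarrow> real \<Rightarrow> nat \<Rightarrow> nat
    \<Rightarrow> (nat \<Rightarrow> 'a::euclidean_space) \<Rightarrow> (nat \<Rightarrow> 'a) \<Rightarrow> nat \<Rightarrow> 'a" where
  "closed_loop \<beta> \<sigma>1 \<sigma>2 \<epsilon> r_avoid vmax n m q p i =
     sat vmax (v_ms \<beta> \<sigma>1 n m q p i + v_cv \<beta> \<sigma>1 \<sigma>2 \<epsilon> r_avoid n m q p i)"

end

theory Submission
  imports Defs
begin



lemma kappa2_bounds: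
  fixes v t :: "'a::euclidean_space"
  assumes "0 < \<epsilon>" "\<epsilon> < 1"
  shows "0 \<le> kappa2 \<epsilon> v t" "kappa2 \<epsilon> v t \<le> 1"
    "v \<bullet> (v + kappa2 \<epsilon> v t *\<^sub>R t) \<ge> \<epsilon> * (norm v)\<^sup>2"
proof -
  define \<phi> where "\<phi> = min ((norm v)\<^sup>2 / \<epsilon>) 1"
  have p0: "0 \<le> \<phi>" "\<phi> \<le> 1" using assms by (auto simp: \<phi>_def)
  have vv: "v \<bullet> v = (norm v)\<^sup>2" by (simp add: power2_norm_eq_inner)
  have "0 \<le> kappa2 \<epsilon> v t \<and> kappa2 \<epsilon> v t \<le> 1
    \<and> v \<bullet> (v + kappa2 \<epsilon> v t *\<^sub>R t) \<ge> \<epsilon> * (norm v)\<^sup>2"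
  proof (cases "v \<bullet> t \<ge> 0")
    case True
    then have k: "kappa2 \<epsilon> v t = \<phi>" by (simp add: kappa2_def \<phi>_def Let_def)
    have "v \<bullet> (v + \<phi> *\<^sub>R t) = (norm v)\<^sup>2 + \<phi> * (v \<bullet> t)"
      by (simp add: inner_add_right vv)
    moreover have "\<phi> * (v \<bullet> t) \<ge> 0" using p0 True by simp
    moreover have "\<epsilon> * (norm v)\<^sup>2 \<le> (norm v)\<^sup>2" using assms
      by (simp add: mult_left_le_one_le)
    ultimately show ?thesis using k p0 by simp
  next
    case False
    define A where "A = - (1 - \<epsilon>) * (norm v)\<^sup>2 / (v \<bullet> t)"
    have A0: "A \<ge> 0" using False assms unfolding A_def
      by (intro divide_nonpos_neg) (auto simp: mult_nonpos_nonneg)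
    have k: "kappa2 \<epsilon> v t = \<phi> * min A 1" using False
      by (simp add: kappa2_def \<phi>_def Let_def A_def)
    have m0: "0 \<le> min A 1" "min A 1 \<le> 1" using A0 by auto
    have "min A 1 * (v \<bullet> t) \<ge> A * (v \<bullet> t)" using False
      by (simp add: mult_right_mono_neg)
    moreover have "A * (v \<bullet> t) = - (1 - \<epsilon>) * (norm v)\<^sup>2" using False
      unfolding A_def by simp
    ultimately have h: "min A 1 * (v \<bullet> t) \<ge> - (1 - \<epsilon>) * (norm v)\<^sup>2" by simp
    have h2: "\<phi> * (min A 1 * (v \<bullet> t)) \<ge> - (1 - \<epsilon>) * (norm v)\<^sup>2"
    proof -
      have "min A 1 * (v \<bullet> t) \<le> 0" using False m0 by (simp add: mult_nonneg_nonpos)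
      then have "\<phi> * (min A 1 * (v \<bullet> t)) \<ge> 1 * (min A 1 * (v \<bullet> t))"
        using p0 by (intro mult_right_mono_neg) auto
      then show ?thesis using h by simp
    qed
    have "v \<bullet> (v + kappa2 \<epsilon> v t *\<^sub>R t) = (norm v)\<^sup>2 + \<phi> * (min A 1 * (v \<bullet> t))"
      by (simp add: k inner_add_right vv)
    then have "v \<bullet> (v + kappa2 \<epsilon> v t *\<^sub>R t) \<ge> \<epsilon> * (norm v)\<^sup>2"
      using h2 by (simp add: algebra_simps)
    moreover have "kappa2 \<epsilon> v t \<le> 1" using k p0 m0 by (simp add: mult_le_one)
    moreover have "0 \<le> kappa2 \<epsilon> v t" using k p0 m0 by simp
    ultimately show ?thesis by simp
  qed
  then show "0 \<le> kappa2 \<epsilon> v t" "kappa2 \<epsilon> v t \<le> 1"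
    "v \<bullet> (v + kappa2 \<epsilon> v t *\<^sub>R t) \<ge> \<epsilon> * (norm v)\<^sup>2" by auto
qed

lemma sat_form:
  fixes z :: "'a::euclidean_space"
  assumes "vmax > 0"
  shows "\<exists>s. sat vmax z = s *\<^sub>R z \<and> 0 < s \<and> s \<le> 1 \<and> s * (norm z + vmax) \<ge> vmax
     \<and> norm (sat vmax z) \<le> vmax"
proof (cases "norm z > vmax")
  case True
  then have nz: "norm z > 0" using assms by linarith
  have "vmax / norm z * (norm z + vmax) \<ge> vmax"
    using nz assms by (simp add: field_simps)
  moreover have "norm ((vmax / norm z) *\<^sub>R z) = vmax" using nz assms by simp
  ultimately show ?thesis using True nz assms
    by (intro exI[of _ "vmax / norm z"]) (auto simp: sat_def)
next
  case False
  then show ?thesis using assms by (intro exI[of _ 1]) (auto simp: sat_def)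
qed

lemma vcvt_bound:
  fixes p :: "nat \<Rightarrow> 'a::euclidean_space"
  assumes "\<sigma>2 > 0" "\<epsilon> > 0" "r > 0"
  shows "norm (v_cv_tilde \<sigma>2 \<epsilon> r n p i) \<le> \<sigma>2 * (real n * (r * r / \<epsilon>))"
proof -
  let ?J = "{j. j < n \<and> j \<noteq> i \<and> norm (p i - p j) \<le> r}"
  have fin: "finite ?J" by simp
  have cardJ: "card ?J \<le> n"
    using card_mono[of "{..<n}" ?J] by auto
  have tb: "norm (((r - norm (p i - p j)) / (norm (p i - p j) + \<epsilon>)) *\<^sub>R (p i - p j))
      \<le> r * r / \<epsilon>" if "j \<in> ?J" for j
  proof -
    let ?d = "norm (p i - p j)"
    have d: "0 \<le> ?d" "?d \<le> r" using that by auto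
    have "\<bar>(r - ?d) / (?d + \<epsilon>)\<bar> = (r - ?d) / (?d + \<epsilon>)" using d assms by simp
    also have "\<dots> \<le> r / \<epsilon>" using d assms by (simp add: frac_le)
    finally have c: "\<bar>(r - ?d) / (?d + \<epsilon>)\<bar> \<le> r / \<epsilon>" .
    have "\<bar>(r - ?d) / (?d + \<epsilon>)\<bar> * ?d \<le> (r / \<epsilon>) * r"
      using c d assms by (intro mult_mono) auto
    then show ?thesis by (simp add: mult.commute)
  qed
  have "norm (\<Sum>j\<in>?J. ((r - norm (p i - p j)) / (norm (p i - p j) + \<epsilon>)) *\<^sub>R (p i - p j))
     \<le> (\<Sum>j\<in>?J. r * r / \<epsilon>)"
    by (rule order_trans[OF norm_sum sum_mono[OF tb]])
  also have "\<dots> = card ?J * (r * r / \<epsilon>)" by simp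
  also have "\<dots> \<le> real n * (r * r / \<epsilon>)" using cardJ assms
    by (intro mult_right_mono) auto
  finally have "\<sigma>2 * norm (\<Sum>j\<in>?J. ((r - norm (p i - p j)) / (norm (p i - p j) + \<epsilon>)) *\<^sub>R (p i - p j))
     \<le> \<sigma>2 * (real n * (r * r / \<epsilon>))" using assms by (intro mult_left_mono) auto
  then show ?thesis using assms unfolding v_cv_tilde_def by simp
qed



definition Esum :: "real \<Rightarrow> nat \<Rightarrow> (nat \<Rightarrow> 'a::euclidean_space) \<Rightarrow> 'a \<Rightarrow> real" where
  "Esum \<beta> n p y = (\<Sum>j<n. exp (- \<beta> * (norm (y - p j))\<^sup>2))"

definition wgt :: "real \<Rightarrow> nat \<Rightarrow> (nat \<Rightarrow> 'a::euclidean_space) \<Rightarrow> (nat \<Rightarrow> 'a) \<Rightarrow> nat \<Rightarrow> nat \<Rightarrow> real" where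
  "wgt \<beta> n q p i k = inverse (mass \<beta> n p (q k)) * exp (- \<beta> * (norm (q k - p i))\<^sup>2)"

lemma Esum_pos: "n \<ge> 1 \<Longrightarrow> Esum \<beta> n p y > 0"
  unfolding Esum_def by (intro sum_pos) (auto simp: lessThan_empty_iff)

lemma Esum_le: "\<beta> \<ge> 0 \<Longrightarrow> Esum \<beta> n p y \<le> real n"
proof -
  assume b: "\<beta> \<ge> 0"
  have "Esum \<beta> n p y \<le> (\<Sum>j<n. 1)" unfolding Esum_def
    using b by (intro sum_mono) (auto simp: mult_nonneg_nonneg)
  then show ?thesis by simp
qed

lemma mass_Esum: "mass \<beta> n p y = Esum \<beta> n p y / real n"
  by (simp add: mass_def Esum_def)

lemma wgt_pos: "n \<ge> 1 \<Longrightarrow> wgt \<beta> n q p i k > 0"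
  unfolding wgt_def mass_Esum using Esum_pos[of n \<beta> p] by simp

lemma wgt_alt: "n \<ge> 1 \<Longrightarrow> wgt \<beta> n q p i k = real n * (exp (- \<beta> * (norm (q k - p i))\<^sup>2) / Esum \<beta> n p (q k))"
  unfolding wgt_def mass_Esum by (simp add: field_simps)

lemma W_lower:
  assumes "n \<ge> 1" "m \<ge> 1" "\<beta> \<ge> 0"
  shows "(\<Sum>k<m. wgt \<beta> n q p i k) \<ge> exp (- \<beta> * (norm (q 0 - p i))\<^sup>2)"
proof -
  have "wgt \<beta> n q p i 0 \<le> (\<Sum>k<m. wgt \<beta> n q p i k)"
    using assms less_imp_le[OF wgt_pos[OF assms(1)]] by (intro member_le_sum) auto
  moreover have "exp (- \<beta> * (norm (q 0 - p i))\<^sup>2) \<le> wgt \<beta> n q p i 0"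
  proof -
    let ?e = "exp (- \<beta> * (norm (q 0 - p i))\<^sup>2)"
    let ?E = "Esum \<beta> n p (q 0)"
    have E: "0 < ?E" "?E \<le> real n" using Esum_pos Esum_le assms by auto
    have "?e * ?E \<le> ?e * real n" using E by (intro mult_left_mono) auto
    then have "?e \<le> real n * (?e / ?E)" using E by (simp add: field_simps)
    then show ?thesis using wgt_alt[OF assms(1), of \<beta> q p i 0] by simp
  qed
  ultimately show ?thesis by simp
qed

lemma vms_G:
  assumes "n \<ge> 1" "m \<ge> 1" "\<sigma>1 > 0"
  shows "(\<Sum>k<m. wgt \<beta> n q p i k *\<^sub>R (q k - p i))
     = ((\<Sum>k<m. wgt \<beta> n q p i k) * real m / \<sigma>1) *\<^sub>R v_ms \<beta> \<sigma>1 n m q p i"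
proof -
  have W: "(\<Sum>k<m. wgt \<beta> n q p i k) > 0" using assms
    by (intro sum_pos) (auto intro: wgt_pos simp: lessThan_empty_iff)
  show ?thesis using W assms
    unfolding v_ms_def wgt_def[symmetric] by (simp add: field_simps)
qed

lemma vms_struct:
  assumes "n \<ge> 1" "m \<ge> 1" "\<sigma>1 > 0" "convex S" "\<And>k. k < m \<Longrightarrow> q k \<in> S"
  shows "\<exists>c. c \<in> S \<and> norm c \<le> (\<Sum>k<m. norm (q k))
      \<and> v_ms \<beta> \<sigma>1 n m q p i = (\<sigma>1 / real m) *\<^sub>R (c - p i)"
proof -
  define W where "W = (\<Sum>k<m. wgt \<beta> n q p i k)"
  have W: "W > 0" using assms unfolding W_def
    by (intro sum_pos) (auto intro: wgt_pos simp: lessThan_empty_iff)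
  define c where "c = (\<Sum>k<m. (wgt \<beta> n q p i k / W) *\<^sub>R q k)"
  have wn: "0 \<le> wgt \<beta> n q p i k / W" for k
    using W wgt_pos[OF assms(1), of \<beta> q p i k] by simp
  have "c \<in> S" unfolding c_def
  proof (rule convex_sum)
    show "(\<Sum>k<m. wgt \<beta> n q p i k / W) = 1" using W
      by (simp add: W_def sum_divide_distrib[symmetric])
  qed (use assms wn in \<open>auto\<close>)
  moreover have "norm c \<le> (\<Sum>k<m. norm (q k))"
  proof -
    have "norm c \<le> (\<Sum>k<m. norm ((wgt \<beta> n q p i k / W) *\<^sub>R q k))"
      unfolding c_def by (rule norm_sum)
    also have "\<dots> \<le> (\<Sum>k<m. norm (q k))"
    proof (rule sum_mono)
      fix k assume "k \<in> {..<m}"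
      have "wgt \<beta> n q p i k \<le> W" unfolding W_def
        using \<open>k \<in> {..<m}\<close> less_imp_le[OF wgt_pos[OF assms(1)]]
        by (intro member_le_sum) auto
      then have a: "0 \<le> wgt \<beta> n q p i k / W" "wgt \<beta> n q p i k / W \<le> 1"
        using W wn by auto
      have "norm ((wgt \<beta> n q p i k / W) *\<^sub>R q k) = (wgt \<beta> n q p i k / W) * norm (q k)"
        using a(1) by (simp only: norm_scaleR abs_of_nonneg)
      also have "\<dots> \<le> norm (q k)" using a by (intro mult_left_le_one_le) auto
      finally show "norm ((wgt \<beta> n q p i k / W) *\<^sub>R q k) \<le> norm (q k)" .
    qed
    finally show ?thesis .
  qed
  moreover have "v_ms \<beta> \<sigma>1 n m q p i = (\<sigma>1 / real m) *\<^sub>R (c - p i)"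
  proof -
    have "(\<Sum>k<m. wgt \<beta> n q p i k *\<^sub>R (q k - p i)) = W *\<^sub>R (c - p i)"
      using W unfolding c_def W_def
      by (simp add: scaleR_diff_right sum_subtractf scaleR_sum_right scaleR_sum_left[symmetric])
    then have e: "(W * real m / \<sigma>1) *\<^sub>R v_ms \<beta> \<sigma>1 n m q p i = W *\<^sub>R (c - p i)"
      using vms_G[OF assms(1-3), of \<beta> q p i] unfolding W_def[symmetric] by simp
    have nz: "W * real m / \<sigma>1 \<noteq> 0" using W assms by simp
    have "v_ms \<beta> \<sigma>1 n m q p i = (\<sigma>1 / (W * real m)) *\<^sub>R ((W * real m / \<sigma>1) *\<^sub>R v_ms \<beta> \<sigma>1 n m q p i)"
      using nz by simp
    also have "\<dots> = (\<sigma>1 / (W * real m) * W) *\<^sub>R (c - p i)" by (simp add: e)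
    also have "\<sigma>1 / (W * real m) * W = \<sigma>1 / real m" using W by simp
    finally show ?thesis .
  qed
  ultimately show ?thesis by blast
qed



lemma d_sq:
  fixes y :: "real \<Rightarrow> 'a::euclidean_space"
  assumes "(y has_vector_derivative y') (at t within T)"
  shows "((\<lambda>s. (norm (a - y s))\<^sup>2) has_real_derivative (- 2 * ((a - y t) \<bullet> y'))) (at t within T)"
proof -
  have "((\<lambda>s. a - y s) has_vector_derivative (- y')) (at t within T)"
    using assms by (auto intro!: derivative_eq_intros)
  then have d: "((\<lambda>s. a - y s) has_derivative (\<lambda>h. h *\<^sub>R (- y'))) (at t within T)"
    by (simp add: has_vector_derivative_def)
  have "((\<lambda>s. (a - y s) \<bullet> (a - y s)) has_derivative
      (\<lambda>h. (a - y t) \<bullet> (h *\<^sub>R (- y')) + (h *\<^sub>R (- y')) \<bullet> (a - y t))) (at t within T)"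
    by (rule has_derivative_inner[OF d d])
  moreover have "(\<lambda>h. (a - y t) \<bullet> (h *\<^sub>R (- y')) + (h *\<^sub>R (- y')) \<bullet> (a - y t))
      = (*) (- 2 * ((a - y t) \<bullet> y'))"
    by (rule ext) (simp add: inner_commute algebra_simps)
  ultimately show ?thesis
    by (simp add: has_field_derivative_def power2_norm_eq_inner)
qed

lemma d_exp:
  fixes y :: "real \<Rightarrow> 'a::euclidean_space"
  assumes "(y has_vector_derivative y') (at t within T)"
  shows "((\<lambda>s. exp (- \<beta> * (norm (a - y s))\<^sup>2)) has_real_derivative
     (2 * \<beta> * exp (- \<beta> * (norm (a - y t))\<^sup>2) * ((a - y t) \<bullet> y'))) (at t within T)"
proof -
  have "((\<lambda>s. - \<beta> * (norm (a - y s))\<^sup>2) has_real_derivative (- \<beta> * (- 2 * ((a - y t) \<bullet> y')))) (at t within T)"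
    by (rule DERIV_cmult[OF d_sq[OF assms]])
  from DERIV_chain2[OF DERIV_exp this] show ?thesis by (simp add: algebra_simps)
qed


lemma V_deriv:
  fixes x :: "real \<Rightarrow> nat \<Rightarrow> 'a::euclidean_space"
  assumes n: "n \<ge> 1" and d: "\<And>j. j < n \<Longrightarrow> ((\<lambda>s. x s j) has_vector_derivative D j) (at t within T)"
  shows "((\<lambda>s. - (\<Sum>k<m. ln (Esum \<beta> n (x s) (q k)))) has_real_derivative
     (- (2 * \<beta> / real n) * (\<Sum>j<n. (\<Sum>k<m. wgt \<beta> n q (x t) j k *\<^sub>R (q k - x t j)) \<bullet> D j)))
     (at t within T)"
proof -
  define e where "e k j = exp (- \<beta> * (norm (q k - x t j))\<^sup>2)" for k j
  define E where "E k = Esum \<beta> n (x t) (q k)" for k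
  have Epos: "E k > 0" for k using Esum_pos[OF n] by (simp add: E_def)
  have dE: "((\<lambda>s. Esum \<beta> n (x s) (q k)) has_real_derivative
      (\<Sum>j<n. 2 * \<beta> * e k j * ((q k - x t j) \<bullet> D j))) (at t within T)" for k
    unfolding Esum_def e_def
    by (rule DERIV_sum) (rule d_exp[OF d], simp)
  have dL: "((\<lambda>s. ln (Esum \<beta> n (x s) (q k))) has_real_derivative
      (1 / E k * (\<Sum>j<n. 2 * \<beta> * e k j * ((q k - x t j) \<bullet> D j)))) (at t within T)" for k
    using DERIV_chain2[OF DERIV_ln_divide[OF Epos[of k], unfolded E_def] dE[of k]] by (simp add: E_def)
  have dV: "((\<lambda>s. - (\<Sum>k<m. ln (Esum \<beta> n (x s) (q k)))) has_real_derivative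
      - (\<Sum>k<m. 1 / E k * (\<Sum>j<n. 2 * \<beta> * e k j * ((q k - x t j) \<bullet> D j)))) (at t within T)"
    by (intro DERIV_minus DERIV_sum dL)
  have "(\<Sum>k<m. 1 / E k * (\<Sum>j<n. 2 * \<beta> * e k j * ((q k - x t j) \<bullet> D j)))
      = (\<Sum>k<m. \<Sum>j<n. 2 * \<beta> * (e k j / E k * ((q k - x t j) \<bullet> D j)))"
    by (simp add: sum_distrib_left algebra_simps)
  also have "\<dots> = (\<Sum>j<n. \<Sum>k<m. 2 * \<beta> * (e k j / E k * ((q k - x t j) \<bullet> D j)))"
    by (rule sum.swap)
  also have "\<dots> = (2 * \<beta> / real n) * (\<Sum>j<n. (\<Sum>k<m. wgt \<beta> n q (x t) j k *\<^sub>R (q k - x t j)) \<bullet> D j)"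
    using n
    by (simp add: inner_sum_left sum_distrib_left wgt_alt e_def E_def algebra_simps diff_divide_distrib)
  finally show ?thesis using dV by simp
qed




lemma cl_props:
  fixes p q :: "nat \<Rightarrow> 'a::euclidean_space" and \<beta> \<sigma>1 :: real and n m j :: nat
  assumes "0 < \<epsilon>" "\<epsilon> < 1" "vmax > 0" "\<sigma>2 > 0" "r > 0"
  defines "v \<equiv> v_ms \<beta> \<sigma>1 n m q p j"
  defines "u \<equiv> v + v_cv \<beta> \<sigma>1 \<sigma>2 \<epsilon> r n m q p j"
  shows "\<exists>s. closed_loop \<beta> \<sigma>1 \<sigma>2 \<epsilon> r vmax n m q p j = s *\<^sub>R u \<and> 0 < s \<and> s \<le> 1
     \<and> s * (norm u + vmax) \<ge> vmax \<and> norm (closed_loop \<beta> \<sigma>1 \<sigma>2 \<epsilon> r vmax n m q p j) \<le> vmax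
     \<and> v \<bullet> u \<ge> \<epsilon> * (norm v)\<^sup>2 \<and> norm u \<le> norm v + \<sigma>2 * (real n * (r * r / \<epsilon>))"
proof -
  let ?t = "v_cv_tilde \<sigma>2 \<epsilon> r n p j"
  let ?k = "kappa2 \<epsilon> v ?t"
  have u: "u = v + ?k *\<^sub>R ?t" unfolding u_def v_def v_cv_def by simp
  have k: "0 \<le> ?k" "?k \<le> 1" "v \<bullet> (v + ?k *\<^sub>R ?t) \<ge> \<epsilon> * (norm v)\<^sup>2"
    using kappa2_bounds[OF assms(1,2)] by auto
  have "norm (?k *\<^sub>R ?t) \<le> norm ?t" using k by (simp add: mult_left_le_one_le)
  also have "\<dots> \<le> \<sigma>2 * (real n * (r * r / \<epsilon>))" using vcvt_bound assms by blast
  finally have nu: "norm u \<le> norm v + \<sigma>2 * (real n * (r * r / \<epsilon>))"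
    unfolding u using norm_triangle_ineq[of v "?k *\<^sub>R ?t"] by linarith
  obtain s where s: "sat vmax u = s *\<^sub>R u" "0 < s" "s \<le> 1" "s * (norm u + vmax) \<ge> vmax"
      "norm (sat vmax u) \<le> vmax"
    using sat_form[OF assms(3), of u] by blast
  have cl: "closed_loop \<beta> \<sigma>1 \<sigma>2 \<epsilon> r vmax n m q p j = sat vmax u"
    unfolding closed_loop_def u_def v_def by simp
  show ?thesis using s nu k u cl by (intro exI[of _ s]) auto
qed

lemma key_lower:
  fixes p q :: "nat \<Rightarrow> 'a::euclidean_space" and S :: "'a set"
  assumes "n \<ge> 1" "m \<ge> 1" "\<beta> > 0" "\<sigma>1 > 0" "0 < \<epsilon>" "\<epsilon> < 1" "vmax > 0" "\<sigma>2 > 0" "r > 0"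
    "convex S" "\<And>k. k < m \<Longrightarrow> q k \<in> S" "norm (p i) \<le> M"
  shows "(\<Sum>k<m. wgt \<beta> n q p i k *\<^sub>R (q k - p i)) \<bullet> closed_loop \<beta> \<sigma>1 \<sigma>2 \<epsilon> r vmax n m q p i
    \<ge> (exp (- \<beta> * (norm (q 0) + M)\<^sup>2) * real m / \<sigma>1)
       * ((vmax / ((\<sigma>1 / real m) * ((\<Sum>k<m. norm (q k)) + M) + \<sigma>2 * (real n * (r * r / \<epsilon>)) + vmax))
       * (\<epsilon> * ((\<sigma>1 / real m) * infdist (p i) S)\<^sup>2))"
proof -
  define a where "a = \<sigma>1 / real m"
  define Q where "Q = (\<Sum>k<m. norm (q k))"
  define B where "B = \<sigma>2 * (real n * (r * r / \<epsilon>))"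
  define v where "v = v_ms \<beta> \<sigma>1 n m q p i"
  define u where "u = v + v_cv \<beta> \<sigma>1 \<sigma>2 \<epsilon> r n m q p i"
  define W where "W = (\<Sum>k<m. wgt \<beta> n q p i k)"
  define D where "D = closed_loop \<beta> \<sigma>1 \<sigma>2 \<epsilon> r vmax n m q p i"
  have a0: "a > 0" using assms by (simp add: a_def)
  have B0: "B \<ge> 0" using assms by (simp add: B_def)
  obtain c where c: "c \<in> S" "norm c \<le> Q" "v = a *\<^sub>R (c - p i)"
  proof -
    have "\<exists>c. c \<in> S \<and> norm c \<le> (\<Sum>k<m. norm (q k))
      \<and> v_ms \<beta> \<sigma>1 n m q p i = (\<sigma>1 / real m) *\<^sub>R (c - p i)"
      by (rule vms_struct) (use assms in auto)
    then show ?thesis using that unfolding Q_def a_def v_def by blast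
  qed
  obtain s where s: "D = s *\<^sub>R u" "0 < s" "s * (norm u + vmax) \<ge> vmax"
      "v \<bullet> u \<ge> \<epsilon> * (norm v)\<^sup>2" "norm u \<le> norm v + B"
    using cl_props[OF assms(5-9), of \<beta> \<sigma>1 n m q p i] unfolding v_def u_def D_def B_def by blast
  have G: "(\<Sum>k<m. wgt \<beta> n q p i k *\<^sub>R (q k - p i)) \<bullet> D = (W * real m / \<sigma>1) * (s * (v \<bullet> u))"
    using vms_G[OF assms(1,2,4), of \<beta> q p i] unfolding W_def[symmetric] v_def[symmetric]
    by (simp add: s(1))
  have W: "W \<ge> exp (- \<beta> * (norm (q 0) + M)\<^sup>2)"
  proof -
    have "norm (q 0 - p i) \<le> norm (q 0) + M"
      using norm_triangle_ineq4[of "q 0" "p i"] assms(12) by linarith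
    then have "(norm (q 0 - p i))\<^sup>2 \<le> (norm (q 0) + M)\<^sup>2"
      by (intro power_mono) auto
    then have "exp (- \<beta> * (norm (q 0) + M)\<^sup>2) \<le> exp (- \<beta> * (norm (q 0 - p i))\<^sup>2)"
      using assms(3) by simp
    also have "\<dots> \<le> W" unfolding W_def using W_lower[of n m \<beta> q p i] assms(1,2,3) by simp
    finally show ?thesis .
  qed
  have nv: "norm v = a * norm (c - p i)" using c a0 by simp
  have "norm (c - p i) \<le> Q + M" using norm_triangle_ineq4[of c "p i"] c assms(12) by linarith
  then have "a * norm (c - p i) \<le> a * (Q + M)" using a0 by (intro mult_left_mono) auto
  then have nuX: "norm u \<le> a * (Q + M) + B" using s(5) nv by linarith
  have Xp: "a * (Q + M) + B + vmax > 0" using nuX assms(7) norm_ge_zero[of u] by linarith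
  have "s * (norm u + vmax) \<le> s * (a * (Q + M) + B + vmax)"
    using nuX s(2) by (intro mult_left_mono) auto
  then have "vmax \<le> s * (a * (Q + M) + B + vmax)" using s(3) by linarith
  then have sl: "s \<ge> vmax / (a * (Q + M) + B + vmax)"
    using Xp by (simp add: pos_divide_le_eq)
  have dl: "a * infdist (p i) S \<le> norm v"
    using infdist_le[OF c(1), of "p i"] nv a0 by (simp add: dist_norm norm_minus_commute)
  have d0: "0 \<le> a * infdist (p i) S" using a0 infdist_nonneg[of "p i" S] by simp
  have "(a * infdist (p i) S)\<^sup>2 \<le> (norm v)\<^sup>2" using dl d0 by (intro power_mono) auto
  then have "\<epsilon> * (a * infdist (p i) S)\<^sup>2 \<le> \<epsilon> * (norm v)\<^sup>2" using assms(5)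
    by (intro mult_left_mono) auto
  then have e1: "\<epsilon> * (a * infdist (p i) S)\<^sup>2 \<le> v \<bullet> u" using s(4) by linarith
  have sl0: "0 \<le> vmax / (a * (Q + M) + B + vmax)"
    using assms(7) Xp by (intro divide_nonneg_pos) auto
  have e2: "vmax / (a * (Q + M) + B + vmax) * (\<epsilon> * (a * infdist (p i) S)\<^sup>2) \<le> s * (v \<bullet> u)"
    using sl e1 sl0 assms(5) by (intro mult_mono) auto
  have e3: "exp (- \<beta> * (norm (q 0) + M)\<^sup>2) * real m / \<sigma>1 \<le> W * real m / \<sigma>1"
    using W assms(4) by (intro divide_right_mono mult_right_mono) auto
  have "(exp (- \<beta> * (norm (q 0) + M)\<^sup>2) * real m / \<sigma>1) * (vmax / (a * (Q + M) + B + vmax) * (\<epsilon> * (a * infdist (p i) S)\<^sup>2))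
      \<le> (W * real m / \<sigma>1) * (s * (v \<bullet> u))"
  proof (rule mult_mono[OF e3 e2])
    show "0 \<le> W * real m / \<sigma>1" using W assms(4) exp_gt_zero[of "- \<beta> * (norm (q 0) + M)\<^sup>2"]
      by (intro divide_nonneg_pos mult_nonneg_nonneg) (auto simp del: exp_gt_zero)
    show "0 \<le> vmax / (a * (Q + M) + B + vmax) * (\<epsilon> * (a * infdist (p i) S)\<^sup>2)"
      using sl0 assms(5) by (intro mult_nonneg_nonneg) auto
  qed
  then show ?thesis using G unfolding D_def a_def Q_def B_def by simp
qed

lemma bnd_pt:
  fixes p q :: "nat \<Rightarrow> 'a::euclidean_space" and S :: "'a set"
  assumes "n \<ge> 1" "m \<ge> 1" "\<beta> > 0" "\<sigma>1 > 0" "0 < \<epsilon>" "\<epsilon> < 1" "vmax > 0" "\<sigma>2 > 0" "r > 0"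
    "convex S" "\<And>k. k < m \<Longrightarrow> q k \<in> S"
    "norm (p i) \<ge> max 1 (((\<Sum>k<m. norm (q k)) * (\<sigma>1 / real m) + (\<Sum>k<m. norm (q k)) * (\<sigma>2 * (real n * (r * r / \<epsilon>))))
        / (\<epsilon> * (\<sigma>1 / real m))) + (\<Sum>k<m. norm (q k))"
  shows "p i \<bullet> closed_loop \<beta> \<sigma>1 \<sigma>2 \<epsilon> r vmax n m q p i \<le> 0"
proof -
  define a where "a = \<sigma>1 / real m"
  define Q where "Q = (\<Sum>k<m. norm (q k))"
  define B where "B = \<sigma>2 * (real n * (r * r / \<epsilon>))"
  define v where "v = v_ms \<beta> \<sigma>1 n m q p i"
  define u where "u = v + v_cv \<beta> \<sigma>1 \<sigma>2 \<epsilon> r n m q p i"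
  define D where "D = closed_loop \<beta> \<sigma>1 \<sigma>2 \<epsilon> r vmax n m q p i"
  define Y0 where "Y0 = max 1 ((Q * a + Q * B) / (\<epsilon> * a))"
  have a0: "a > 0" using assms by (simp add: a_def)
  have B0: "B \<ge> 0" using assms by (simp add: B_def)
  obtain c where c: "c \<in> S" "norm c \<le> Q" "v = a *\<^sub>R (c - p i)"
  proof -
    have "\<exists>c. c \<in> S \<and> norm c \<le> (\<Sum>k<m. norm (q k))
      \<and> v_ms \<beta> \<sigma>1 n m q p i = (\<sigma>1 / real m) *\<^sub>R (c - p i)"
      by (rule vms_struct) (use assms in auto)
    then show ?thesis using that unfolding Q_def a_def v_def by blast
  qed
  obtain s where s: "D = s *\<^sub>R u" "0 < s" 
      "v \<bullet> u \<ge> \<epsilon> * (norm v)\<^sup>2" "norm u \<le> norm v + B"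
    using cl_props[OF assms(5-9), of \<beta> \<sigma>1 n m q p i] unfolding v_def u_def D_def B_def by blast
  define y where "y = norm (c - p i)"
  have Q0: "Q \<ge> 0" unfolding Q_def by (simp add: sum_nonneg)
  have hp: "norm (p i) \<ge> Y0 + Q" using assms(12) unfolding Y0_def Q_def a_def B_def by simp
  have yY: "y \<ge> Y0" using norm_triangle_ineq3[of "p i" c] c(2) hp unfolding y_def
    by (simp add: norm_minus_commute)
  have Y1: "Y0 \<ge> 1" "\<epsilon> * a * Y0 \<ge> Q * a + Q * B"
  proof -
    show "Y0 \<ge> 1" by (simp add: Y0_def)
    have ea: "\<epsilon> * a > 0" using a0 assms(5) by simp
    have "(Q * a + Q * B) / (\<epsilon> * a) \<le> Y0" by (simp add: Y0_def)
    then have "(\<epsilon> * a) * ((Q * a + Q * B) / (\<epsilon> * a)) \<le> (\<epsilon> * a) * Y0"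
      using ea by (intro mult_left_mono) auto
    moreover have "(\<epsilon> * a) * ((Q * a + Q * B) / (\<epsilon> * a)) = Q * a + Q * B"
      using ea by (simp only: times_divide_eq_right nonzero_mult_div_cancel_left less_irrefl)
    ultimately show "\<epsilon> * a * Y0 \<ge> Q * a + Q * B" by linarith
  qed
  have nv: "norm v = a * y" using c a0 by (simp add: y_def)
  have vu: "v \<bullet> u = a * ((c - p i) \<bullet> u)" using c by simp
  have h1: "(c - p i) \<bullet> u \<ge> \<epsilon> * a * y\<^sup>2"
  proof -
    have "a * ((c - p i) \<bullet> u) \<ge> a * (\<epsilon> * a * y\<^sup>2)"
      using s(3) vu nv by (simp add: power_mult_distrib algebra_simps power2_eq_square)
    then show ?thesis using a0 by simp
  qed
  have h2: "c \<bullet> u \<le> Q * (a * y + B)"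
  proof -
    have "c \<bullet> u \<le> norm c * norm u" by (rule norm_cauchy_schwarz)
    also have "\<dots> \<le> Q * (a * y + B)" using c(2) s(4) nv Q0
      by (intro mult_mono) auto
    finally show ?thesis .
  qed
  have "p i \<bullet> u = c \<bullet> u - (c - p i) \<bullet> u" by (simp add: inner_diff_left)
  also have "\<dots> \<le> Q * a * y + Q * B - \<epsilon> * a * y\<^sup>2" using h1 h2 by (simp add: algebra_simps)
  also have "\<dots> \<le> 0"
  proof -
    have y1: "y \<ge> 1" using yY Y1 by linarith
    have "\<epsilon> * a * y\<^sup>2 = (\<epsilon> * a * y) * y" by (simp add: power2_eq_square)
    also have "\<dots> \<ge> (Q * a + Q * B) * y"
    proof -
      have "\<epsilon> * a * Y0 \<le> \<epsilon> * a * y" using yY a0 assms(5) by (intro mult_left_mono) auto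
      then have "Q * a + Q * B \<le> \<epsilon> * a * y" using Y1 by linarith
      then show ?thesis using y1 by (intro mult_right_mono) auto
    qed
    finally have "\<epsilon> * a * y\<^sup>2 \<ge> (Q * a + Q * B) * y" .
    moreover have "Q * B * y \<ge> Q * B" using y1 Q0 B0 mult_left_mono[of 1 y "Q * B"] by simp
    ultimately show ?thesis by (simp add: algebra_simps)
  qed
  finally have "p i \<bullet> u \<le> 0" .
  then show ?thesis using s(1,2) unfolding D_def by (simp add: mult_nonneg_nonpos)
qed



theorem theorem4:
  fixes x :: "real \<Rightarrow> nat \<Rightarrow> 'a::euclidean_space"
    and q :: "nat \<Rightarrow> 'a" and S :: "'a set"
    and n m :: nat and \<beta> \<sigma>1 \<sigma>2 \<epsilon> r_avoid vmax t0 :: real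
  assumes "n \<ge> 2" and "m \<ge> 1"
    and "\<beta> > 0" and "\<sigma>1 > 0" and "\<sigma>2 > 0" and "0 < \<epsilon>" and "\<epsilon> < 1"
    and "r_avoid > 0" and "vmax > 0"
    and "closed S" and "convex S" and "\<And>k. k < m \<Longrightarrow> q k \<in> S"
    and sol: "\<And>t i. t \<ge> t0 \<Longrightarrow> i < n \<Longrightarrow>
       ((\<lambda>s. x s i) has_vector_derivative closed_loop \<beta> \<sigma>1 \<sigma>2 \<epsilon> r_avoid vmax n m q (x t) i)
         (at t within {t0..})"
    and "i < n"
  shows "((\<lambda>t. infdist (x t i) S) \<longlongrightarrow> 0) at_top"
proof -
  have n1: "n \<ge> 1" using assms(1) by simp
  define D where "D t j = closed_loop \<beta> \<sigma>1 \<sigma>2 \<epsilon> r_avoid vmax n m q (x t) j" for t j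
  define d where "d t = infdist (x t i) S" for t
  define Q where "Q = (\<Sum>k<m. norm (q k))"
  define a where "a = \<sigma>1 / real m"
  define B where "B = \<sigma>2 * (real n * (r_avoid * r_avoid / \<epsilon>))"
  define Y0 where "Y0 = max 1 ((Q * a + Q * B) / (\<epsilon> * a))"
  define M where "M = max (norm (x t0 i)) (Y0 + Q)"
  have a0: "a > 0" using assms by (simp add: a_def)
  have B0: "B \<ge> 0" using assms by (simp add: B_def)
  have Q0: "Q \<ge> 0" unfolding Q_def by (simp add: sum_nonneg)
  have M0: "M \<ge> 0" unfolding M_def by (simp add: le_max_iff_disj)
  have sol': "\<And>t j. t \<ge> t0 \<Longrightarrow> j < n \<Longrightarrow> ((\<lambda>s. x s j) has_vector_derivative D t j) (at t within {t0..})"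
    unfolding D_def using sol by blast
  have Dn: "norm (D t j) \<le> vmax" for t j
    using cl_props[OF assms(6,7,9,5,8), of \<beta> \<sigma>1 n m q "x t" j] unfolding D_def by blast
  have cont: "continuous_on {t0..} (\<lambda>s. x s i)"
    unfolding continuous_on_eq_continuous_within
    using sol'[OF _ assms(14)] by (auto intro: has_vector_derivative_continuous)
  have lip: "norm (x t i - x s i) \<le> vmax * \<bar>t - s\<bar>" if "s \<ge> t0" "t \<ge> t0" for s t
  proof -
    have "norm ((\<lambda>s. x s i) t - (\<lambda>s. x s i) s) \<le> vmax * norm (t - s)"
    proof (rule differentiable_bound[where S="{t0..}" and f'="\<lambda>z h. h *\<^sub>R D z i"])
      show "convex {t0..}" by (rule convex_real_interval)
      fix z assume z: "z \<in> {t0..}"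
      show "((\<lambda>s. x s i) has_derivative (\<lambda>h. h *\<^sub>R D z i)) (at z within {t0..})"
        using sol'[of z i] z assms(14) by (simp add: has_vector_derivative_def)
      have "onorm (\<lambda>h::real. h *\<^sub>R D z i) = onorm (\<lambda>h::real. h) * norm (D z i)"
        by (rule onorm_scaleR_left) (rule bounded_linear_ident)
      then show "onorm (\<lambda>h::real. h *\<^sub>R D z i) \<le> vmax" using Dn by (simp add: onorm_id)
    qed (use that in auto)
    then show ?thesis by simp
  qed
  have dlip: "\<bar>d t - d s\<bar> \<le> vmax * \<bar>t - s\<bar>" if "s \<ge> t0" "t \<ge> t0" for s t
    using infdist_triangle_abs[of "x t i" S "x s i"] lip[OF that] unfolding d_def
    by (simp add: dist_norm)
  have bnd: "norm (x b i) \<le> M" if b: "b \<ge> t0" for b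
  proof (rule ccontr)
    assume nb: "\<not> norm (x b i) \<le> M"
    define A where "A = {t0..b} \<inter> (\<lambda>t. norm (x t i)) -` {..M}"
    have cA: "closed A" unfolding A_def
    proof (rule continuous_closed_preimage)
      show "continuous_on {t0..b} (\<lambda>t. norm (x t i))"
        by (intro continuous_on_norm continuous_on_subset[OF cont]) auto
    qed auto
    have t0A: "t0 \<in> A" unfolding A_def M_def using b by auto
    have bA: "bdd_above A" unfolding A_def by (rule bdd_aboveI[of _ b]) auto
    define s where "s = Sup A"
    have sA: "s \<in> A" unfolding s_def using closed_contains_Sup[OF _ bA cA] t0A by blast
    have sb: "t0 \<le> s" "s \<le> b" "norm (x s i) \<le> M" using sA unfolding A_def by auto
    have slt: "s < b" using sb nb by (cases "s = b") auto
    have gt: "norm (x t i) > M" if "s < t" "t \<le> b" for t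
    proof (rule ccontr)
      assume "\<not> norm (x t i) > M"
      then have "t \<in> A" unfolding A_def using that sb by auto
      then have "t \<le> s" unfolding s_def using bA by (rule cSup_upper)
      then show False using that by simp
    qed
    define h where "h t = (norm (0 - x t i))\<^sup>2" for t
    have dh: "(h has_real_derivative (- 2 * ((0 - x t i) \<bullet> D t i))) (at t within {s..b})"
      if "s \<le> t" "t \<le> b" for t
    proof -
      have "(h has_real_derivative (- 2 * ((0 - x t i) \<bullet> D t i))) (at t within {t0..})"
        unfolding h_def by (rule d_sq[OF sol'[OF _ assms(14)]]) (use that sb in auto)
      then show ?thesis by (rule has_field_derivative_subset) (use sb in auto)
    qed
    obtain \<xi> where xi: "\<xi> \<in> {s<..<b}" "h b - h s = (*) (- 2 * ((0 - x \<xi> i) \<bullet> D \<xi> i)) (b - s)"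
      using mvt_simple[OF slt, of h "\<lambda>t. (*) (- 2 * ((0 - x t i) \<bullet> D t i))"] dh
      unfolding has_field_derivative_def by blast
    have "norm (x \<xi> i) \<ge> max 1 ((Q * a + Q * B) / (\<epsilon> * a)) + Q"
      using gt[of \<xi>] xi(1) unfolding M_def Y0_def by auto
    then have "x \<xi> i \<bullet> D \<xi> i \<le> 0" unfolding D_def Q_def a_def B_def
      by (intro bnd_pt[where S=S]) (use assms n1 in auto)
    then have "h b - h s \<le> 0" using xi(2) slt by (simp add: mult_nonneg_nonpos)
    moreover have "h s \<le> M\<^sup>2" unfolding h_def using sb(3) by (simp add: power_mono)
    moreover have "h b > M\<^sup>2" unfolding h_def using nb M0
      by (simp add: power_strict_mono)
    ultimately show False by simp
  qed
  define V where "V t = - (\<Sum>k<m. ln (Esum \<beta> n (x t) (q k)))" for t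
  define V' where "V' t = - (2 * \<beta> / real n) *
      (\<Sum>j<n. (\<Sum>k<m. wgt \<beta> n q (x t) j k *\<^sub>R (q k - x t j)) \<bullet> D t j)" for t
  have dV: "(V has_real_derivative V' t) (at t within {t0..})" if "t \<ge> t0" for t
    unfolding V_def V'_def by (rule V_deriv[OF n1 sol'[OF that]])
  have Vlow: "V t \<ge> - (real m * ln (real n))" for t
  proof -
    have "ln (Esum \<beta> n (x t) (q k)) \<le> ln (real n)" for k
      using Esum_pos[OF n1] Esum_le[of \<beta> n] assms(3) by (intro ln_mono) auto
    then have "(\<Sum>k<m. ln (Esum \<beta> n (x t) (q k))) \<le> real (card {..<m}) * ln (real n)"
      by (intro sum_bounded_above) auto
    then show ?thesis unfolding V_def by simp
  qed
  define \<eta> where "\<eta> = (2 * \<beta> / real n) * ((exp (- \<beta> * (norm (q 0) + M)\<^sup>2) * real m / \<sigma>1)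
       * ((vmax / (a * (Q + M) + B + vmax)) * (\<epsilon> * a\<^sup>2)))"
  have aQM: "a * (Q + M) + B + vmax > 0" using a0 B0 Q0 M0 assms(9)
    by (smt (verit) mult_nonneg_nonneg)
  have eta0: "\<eta> > 0" unfolding \<eta>_def using assms a0 B0 Q0 M0 n1 aQM
    by (intro mult_pos_pos divide_pos_pos) auto
  have lowpos: "0 \<le> (exp (- \<beta> * (norm (q 0) + N)\<^sup>2) * real m / \<sigma>1)
       * ((vmax / ((\<sigma>1 / real m) * ((\<Sum>k<m. norm (q k)) + N) + \<sigma>2 * (real n * (r_avoid * r_avoid / \<epsilon>)) + vmax))
       * (\<epsilon> * ((\<sigma>1 / real m) * y)\<^sup>2))" if "N \<ge> 0" for N y
    using assms that a0 B0 Q0 mult_nonneg_nonneg[of a "Q + N"] unfolding a_def[symmetric] Q_def[symmetric] B_def[symmetric]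
    by (intro mult_nonneg_nonneg divide_nonneg_pos add_nonneg_pos) auto
  have V'le: "V' t \<le> - \<eta> * (d t)\<^sup>2" if t: "t \<ge> t0" for t
  proof -
    let ?G = "\<lambda>j. (\<Sum>k<m. wgt \<beta> n q (x t) j k *\<^sub>R (q k - x t j)) \<bullet> D t j"
    have Gnn: "?G j \<ge> 0" for j
    proof -
      have "?G j \<ge> (exp (- \<beta> * (norm (q 0) + norm (x t j))\<^sup>2) * real m / \<sigma>1)
       * ((vmax / ((\<sigma>1 / real m) * ((\<Sum>k<m. norm (q k)) + norm (x t j)) + \<sigma>2 * (real n * (r_avoid * r_avoid / \<epsilon>)) + vmax))
       * (\<epsilon> * ((\<sigma>1 / real m) * infdist (x t j) S)\<^sup>2))"
        unfolding D_def by (rule key_lower) (use assms n1 in auto)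
      then show ?thesis using lowpos[of "norm (x t j)" "infdist (x t j) S"] by simp
    qed
    have Gi: "?G i \<ge> (exp (- \<beta> * (norm (q 0) + M)\<^sup>2) * real m / \<sigma>1)
       * ((vmax / ((\<sigma>1 / real m) * ((\<Sum>k<m. norm (q k)) + M) + \<sigma>2 * (real n * (r_avoid * r_avoid / \<epsilon>)) + vmax))
       * (\<epsilon> * ((\<sigma>1 / real m) * infdist (x t i) S)\<^sup>2))"
      unfolding D_def by (rule key_lower) (use assms n1 bnd[OF t] in auto)
    have "?G i \<le> (\<Sum>j<n. ?G j)" using Gnn assms(14) by (intro member_le_sum) auto
    define L where "L = (exp (- \<beta> * (norm (q 0) + M)\<^sup>2) * real m / \<sigma>1)
       * ((vmax / (a * (Q + M) + B + vmax)) * (\<epsilon> * (a * d t)\<^sup>2))"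
    have GL: "L \<le> (\<Sum>j<n. ?G j)" using Gi \<open>?G i \<le> (\<Sum>j<n. ?G j)\<close>
      unfolding L_def d_def a_def Q_def B_def by linarith
    have eq: "\<eta> * (d t)\<^sup>2 = (2 * \<beta> / real n) * L"
      unfolding \<eta>_def L_def by (simp add: power_mult_distrib mult_ac)
    have "(2 * \<beta> / real n) * L \<le> (2 * \<beta> / real n) * (\<Sum>j<n. ?G j)"
      using GL assms n1 by (intro mult_left_mono) auto
    then show ?thesis unfolding V'_def using eq by simp
  qed
  have Vmvt: "\<exists>\<xi>\<in>{s..t}. V t - V s = V' \<xi> * (t - s)" if "t0 \<le> s" "s \<le> t" for s t
  proof -
    have "\<exists>\<xi>\<in>{s..t}. V t - V s = (*) (V' \<xi>) (t - s)"
    proof (rule mvt_very_simple[OF that(2)])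
      fix z assume "s \<le> z" "z \<le> t"
      then have "(V has_real_derivative V' z) (at z within {s..t})"
        using that by (intro has_field_derivative_subset[OF dV]) auto
      then show "(V has_derivative (*) (V' z)) (at z within {s..t})"
        by (simp add: has_field_derivative_def)
    qed
    then show ?thesis by simp
  qed
  have Vmono: "V t \<le> V s" if st: "t0 \<le> s" "s \<le> t" for s t
  proof -
    obtain \<xi> where xi: "\<xi> \<in> {s..t}" "V t - V s = V' \<xi> * (t - s)" using Vmvt[OF st] by blast
    have "\<eta> * (d \<xi>)\<^sup>2 \<ge> 0" using eta0 by simp
    then have "V' \<xi> \<le> 0" using V'le[of \<xi>] xi(1) st by auto
    then have "V' \<xi> * (t - s) \<le> 0" using st by (intro mult_nonpos_nonneg) auto
    then show ?thesis using xi(2) by simp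
  qed
  show ?thesis unfolding d_def[symmetric]
  proof (rule order_tendstoI)
    fix l :: real assume "l < 0"
    have "l < d t" for t using \<open>l < 0\<close> infdist_nonneg[of "x t i" S] unfolding d_def by linarith
    then show "eventually (\<lambda>t. l < d t) at_top" by simp
  next
    fix e :: real assume e: "e > 0"
    show "eventually (\<lambda>t. d t < e) at_top"
    proof (rule ccontr)
      assume ne: "\<not> eventually (\<lambda>t. d t < e) at_top"
      have fr: "\<exists>t\<ge>T. d t \<ge> e" for T
        using ne unfolding eventually_at_top_linorder by (auto simp: not_less)
      define hh where "hh = e / (2 * vmax)"
      have hh0: "hh > 0" using e assms(9) by (simp add: hh_def)
      define \<delta> where "\<delta> = \<eta> * (e / 2)\<^sup>2 * hh"
      have d0: "\<delta> > 0" using eta0 hh0 e by (simp add: \<delta>_def)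
      have step: "V (t1 + hh) \<le> V t1 - \<delta>" if t1: "t1 \<ge> t0" "d t1 \<ge> e" for t1
      proof -
        obtain \<xi> where xi: "\<xi> \<in> {t1..t1 + hh}" "V (t1 + hh) - V t1 = V' \<xi> * (t1 + hh - t1)"
          using Vmvt[of t1 "t1 + hh"] t1 hh0 by auto
        have "\<bar>d \<xi> - d t1\<bar> \<le> vmax * \<bar>\<xi> - t1\<bar>" using dlip[of t1 \<xi>] xi(1) t1 by auto
        also have "\<dots> \<le> vmax * hh" using xi(1) assms(9) by (intro mult_left_mono) auto
        also have "\<dots> = e / 2" using assms(9) by (simp add: hh_def)
        finally have "d \<xi> \<ge> e / 2" using t1 by linarith
        then have "(e / 2)\<^sup>2 \<le> (d \<xi>)\<^sup>2" using e by (intro power_mono) auto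
        then have "\<eta> * (e / 2)\<^sup>2 \<le> \<eta> * (d \<xi>)\<^sup>2" using eta0 by (intro mult_left_mono) auto
        then have "V' \<xi> \<le> - (\<eta> * (e / 2)\<^sup>2)" using V'le[of \<xi>] xi(1) t1 by auto
        then have "V' \<xi> * hh \<le> - (\<eta> * (e / 2)\<^sup>2) * hh" using hh0 by (intro mult_right_mono) auto
        then show ?thesis using xi(2) unfolding \<delta>_def by simp
      qed
      have iter: "\<exists>T\<ge>t0. V T \<le> V t0 - real N * \<delta>" for N :: nat
      proof (induction N)
        case 0
        then show ?case by auto
      next
        case (Suc N)
        then obtain T where T: "T \<ge> t0" "V T \<le> V t0 - real N * \<delta>" by blast
        obtain t1 where t1: "t1 \<ge> T" "d t1 \<ge> e" using fr by blast
        have "V (t1 + hh) \<le> V t1 - \<delta>" using step[of t1] t1 T by auto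
        also have "V t1 \<le> V T" using Vmono[of T t1] T t1 by auto
        finally have "V (t1 + hh) \<le> V t0 - real (Suc N) * \<delta>" using T by (simp add: algebra_simps)
        moreover have "t1 + hh \<ge> t0" using T t1 hh0 by auto
        ultimately show ?case by blast
      qed
      obtain N :: nat where N: "V t0 + real m * ln (real n) < real N * \<delta>"
        using reals_Archimedean3[OF d0] by blast
      obtain T where "V T \<le> V t0 - real N * \<delta>" using iter by blast
      then show False using Vlow[of T] N by linarith
    qed
  qed
qed

end
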